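(* Fix a starting price $s\in[0,1]$ and consider symmetric equilibria of the Istanbul Flower Auction of the following form. There is a cutoff $p(s)\in[s,1]$ such that a bidder bids at the starting price iff her value $v\ge p(s)$, and otherwise waits. A waiting bidder with value $v$ bids $\beta(v,s)$ in the Dutch phase, where $\beta(v,s)=b(v,s)$ for $v\le\lambda(s)$ and $\beta(v,s)=s$ for $\lambda(s)\le v\le p(s)$. Here $\lambda(s)\le p(s)$, and $b(\cdot,s)$ is strictly increasing and differentiable with $b(0,s)=0$ and values in $[0,s]$. Ties at the price $s$ in the Dutch phase are broken uniformly at random. Then in any such equilibrium $\lambda(s)=p(s)$. Consequently, in the Dutch phase a tie occurs with probability zero. Moreover, suppose $p(s)<1$. The cutoff is pinned down by the indifference condition of a bidder with value $p(s)$ between bidding and waiting, i.e. $c(s-b(p,s))\,p-b(p,s)=p-s$. Then $p(s)$ is the unique solution $p$ of $b(p,s)=s$, and no other $p\in[s,p(s))$ satisfies this indifference condition. When $p(s)=1$, we have $b(1,s)\le s$.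
   Context: Single indivisible item, $n\ge2$ bidders. Private values are i.i.d. on $[0,1]$ with twice differentiable CDF $F$ and density $f$. Write $G(v)=F^{n-1}(v)$ and $g=G'$. Time cost: a differentiable function $c:[0,1]\to\mathbb{R}_+$ with $c(0)=1$ and $c'(t)>-1$. Either $c\equiv1$ ("no time cost"), or $c'(t)<0$ for all $t$ ("there is a time cost"). If a bidder with value $v$ wins at price $p$ after auction duration $t$, her utility is $c(t)v-p$ and the auctioneer receives $p$; losers get $0$. Istanbul Flower Auction with starting price $s\in[0,1]$: bidders simultaneously decide, at no time cost, whether to bid at $s$. - If nobody bids, a Dutch phase follows: the price descends from $s$ until someone bids, and the duration is $t=s-p$ at selling price $p$. - If at least one bids, an English phase among the initial bidders follows: the price ascends from $s$ until the second-to-last initial bidder leaves, and the duration is $t=p-s$. If exactly one bids, the sale is at $s$ with duration $0$. The Dutch-phase first-order condition is $$\frac{\partial b(v,s)}{\partial v}=\frac{g(v)}{G(v)}\,\frac{c(s-b(v,s))v-b(v,s)}{1+c'(s-b(v,s))v},\qquad b(0,s)=0.$$ In the English phase a bidder of value $v\ge p(s)$ stays in until the price $m(v,s)$, defined by $c(m(v,s)-s)v-m(v,s)=0$. A bidder with value $v\ge p(s)$ who bids at $s$ has expected utility $(v-s)G(p(s))+\int_{p(s)}^v[c(m(x,s)-s)v-m(x,s)]\,dG(x)$; at $v=p(s)$ this equals $(p(s)-s)G(p(s))$. *)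

theory Defs
  imports "HOL-Analysis.Analysis"
begin

definition valprob :: "(real \<Rightarrow> real) \<Rightarrow> real set \<Rightarrow> real" where
  "valprob f S = measure (density lborel (\<lambda>w. ennreal (f w * indicator {0..1} w))) S"

definition dutch_bid :: "real \<Rightarrow> real \<Rightarrow> (real \<Rightarrow> real) \<Rightarrow> real \<Rightarrow> real" where
  "dutch_bid s lam b v = (if v \<le> lam then b v else s)"

text \<open>Each opponent must have
  waited (value < p); opponents bidding strictly below x are beaten, ties at x are broken
  uniformly at random.\<close>
definition dutch_winprob ::
  "nat \<Rightarrow> (real \<Rightarrow> real) \<Rightarrow> real \<Rightarrow> (real \<Rightarrow> real) \<Rightarrow> real \<Rightarrow> real" where
  "dutch_winprob n f p beta x =
     (let ql = valprob f {w \<in> {0..<p}. beta w < x};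
          qe = valprob f {w \<in> {0..<p}. beta w = x}
      in (\<Sum>k\<in>{0..n-1}. real ((n-1) choose k) * qe ^ k * ql ^ (n-1-k) / real (k+1)))"

text \<open>Expected utility of a bidder with value v who waits and bids x in the Dutch phase
  (duration s - x).\<close>
definition dutch_util ::
  "nat \<Rightarrow> (real \<Rightarrow> real) \<Rightarrow> (real \<Rightarrow> real) \<Rightarrow> real \<Rightarrow> real \<Rightarrow> (real \<Rightarrow> real) \<Rightarrow> real \<Rightarrow> real \<Rightarrow> real" where
  "dutch_util n f c s p beta v x = (c (s - x) * v - x) * dutch_winprob n f p beta x"

definition eng_drop :: "(real \<Rightarrow> real) \<Rightarrow> real \<Rightarrow> real \<Rightarrow> real" where
  "eng_drop c s v = (THE y. y \<in> {s..1} \<and> c (y - s) * v - y = 0)"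

text \<open>Expected utility of a bidder with value v who bids at the starting price s, when
  opponents use cutoff p. For v \<ge> p this is the formula of the paper, with dG = g dx,
  G = F^(n-1), g = (n-1) F^(n-2) f. For v < p (a deviation) the bidder wins only if all
  opponents wait, at price s.\<close>
definition bid_util ::
  "nat \<Rightarrow> (real \<Rightarrow> real) \<Rightarrow> (real \<Rightarrow> real) \<Rightarrow> (real \<Rightarrow> real) \<Rightarrow> real \<Rightarrow> real \<Rightarrow> real \<Rightarrow> real" where
  "bid_util n F f c s p v =
     (if p \<le> v then
        (v - s) * F p ^ (n-1)
        + integral {p..v} (\<lambda>x. (c (eng_drop c s x - s) * v - eng_drop c s x)
                                 * (real (n-1) * F x ^ (n-2) * f x))
      else (v - s) * F p ^ (n-1))"

definition is_equilibrium ::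
  "nat \<Rightarrow> (real \<Rightarrow> real) \<Rightarrow> (real \<Rightarrow> real) \<Rightarrow> (real \<Rightarrow> real) \<Rightarrow> real
    \<Rightarrow> real \<Rightarrow> real \<Rightarrow> (real \<Rightarrow> real) \<Rightarrow> bool" where
  "is_equilibrium n F f c s p lam b =
     (\<forall>v\<in>{0..1}.
        (p \<le> v \<longrightarrow>
           (\<forall>x\<in>{0..s}. dutch_util n f c s p (dutch_bid s lam b) v x \<le> bid_util n F f c s p v))
      \<and> (v < p \<longrightarrow>
           bid_util n F f c s p v \<le> dutch_util n f c s p (dutch_bid s lam b) v (dutch_bid s lam b v)
         \<and> (\<forall>x\<in>{0..s}. dutch_util n f c s p (dutch_bid s lam b) v x
                         \<le> dutch_util n f c s p (dutch_bid s lam b) v (dutch_bid s lam b v))))"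

end

theory Submission
  imports Defs
begin


context
  fixes F f :: "real \<Rightarrow> real"
  assumes Fder: "\<And>x. x \<in> {0..1} \<Longrightarrow> (F has_real_derivative f x) (at x within {0..1})"
    and fcont: "continuous_on {0..1} f"
    and fnn: "\<And>x. x \<in> {0..1} \<Longrightarrow> f x \<ge> 0"
begin

abbreviation "MM \<equiv> density lborel (\<lambda>w. ennreal (f w * indicator {0..1} w))"

lemma meas_g: "(\<lambda>w. ennreal (f w * indicator {0..1} w)) \<in> borel_measurable lborel"
proof -
  have "(\<lambda>x. indicator {0..1} x *\<^sub>R f x) \<in> borel_measurable borel"
    by (rule borel_measurable_continuous_on_indicator) (auto simp: fcont)
  then show ?thesis by (simp add: mult.commute)
qed

lemma ftc_nn:
  assumes ab: "0 \<le> a" "a \<le> b" "b \<le> 1"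
  shows "(\<integral>\<^sup>+ x. ennreal (f x) * indicator {a..b} x \<partial>lborel) = ennreal (F b - F a)"
proof (rule nn_integral_has_integral_lebesgue')
  show "\<And>x. x \<in> {a..b} \<Longrightarrow> 0 \<le> f x" using ab fnn by auto
  show "(f has_integral F b - F a) {a..b}"
  proof (rule fundamental_theorem_of_calculus[OF ab(2)])
    fix x assume x: "x \<in> {a..b}"
    have "(F has_real_derivative f x) (at x within {0..1})" using x ab by (intro Fder) auto
    then have "(F has_real_derivative f x) (at x within {a..b})"
      by (rule has_field_derivative_subset) (use ab in auto)
    then show "(F has_vector_derivative f x) (at x within {a..b})"
      by (simp add: has_real_derivative_iff_has_vector_derivative)
  qed
qed

lemma vp_Icc_e:
  assumes ab: "0 \<le> a" "a \<le> b" "b \<le> 1"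
  shows "emeasure MM {a..b} = ennreal (F b - F a)"
proof -
  have "emeasure MM {a..b}
      = (\<integral>\<^sup>+ x. ennreal (f x * indicator {0..1} x) * indicator {a..b} x \<partial>lborel)"
    by (rule emeasure_density[OF meas_g]) simp
  also have "\<dots> = (\<integral>\<^sup>+ x. ennreal (f x) * indicator {a..b} x \<partial>lborel)"
    using ab by (intro nn_integral_cong) (auto simp: indicator_def)
  also have "\<dots> = ennreal (F b - F a)" by (rule ftc_nn[OF ab])
  finally show ?thesis .
qed

lemma MM_fin: "finite_measure MM"
proof
  have "emeasure MM (space MM)
      = (\<integral>\<^sup>+ x. ennreal (f x * indicator {0..1} x) * indicator UNIV x \<partial>lborel)"
    by (simp add: emeasure_density[OF meas_g])
  also have "\<dots> = (\<integral>\<^sup>+ x. ennreal (f x) * indicator {0..1} x \<partial>lborel)"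
    by (intro nn_integral_cong) (auto simp: indicator_def)
  also have "\<dots> = ennreal (F 1 - F 0)" by (rule ftc_nn) auto
  finally show "emeasure MM (space MM) \<noteq> \<infinity>" by simp
qed

lemma sets_MM[simp]: "sets MM = sets borel" by simp

lemma vp_Icc:
  assumes ab: "0 \<le> a" "a \<le> b" "b \<le> 1" "F a \<le> F b"
  shows "valprob f {a..b} = F b - F a"
  unfolding valprob_def
  by (rule measure_eq_emeasure_eq_ennreal) (use ab vp_Icc_e in auto)

lemma vp_sing:
  assumes "0 \<le> a" "a \<le> 1"
  shows "valprob f {a} = 0"
  using vp_Icc[of a a] assms by simp

lemma vp_Ico:
  assumes ab: "0 \<le> a" "a \<le> b" "b \<le> 1" "F a \<le> F b"
  shows "valprob f {a..<b} = F b - F a"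
proof -
  interpret finite_measure MM by (rule MM_fin)
  have "{a..<b} = {a..b} - {b}" by auto
  then have "valprob f {a..<b} = measure MM {a..b} - measure MM {b}"
    unfolding valprob_def using ab by (simp add: finite_measure_Diff)
  also have "\<dots> = F b - F a" using vp_Icc[OF ab] vp_sing[of b] ab unfolding valprob_def by simp
  finally show ?thesis .
qed

lemma vp_mono:
  assumes "A \<subseteq> B" "B \<in> sets borel"
  shows "valprob f A \<le> valprob f B"
proof -
  interpret finite_measure MM by (rule MM_fin)
  show ?thesis
  proof (cases "A \<in> sets borel")
    case True then show ?thesis unfolding valprob_def using assms
      by (intro finite_measure_mono) auto
  next
    case False
    then show ?thesis unfolding valprob_def by (simp add: measure_notin_sets)
  qed
qed

lemma vp_add_le:
  assumes "A \<inter> B = {}" "A \<union> B \<subseteq> C" "C \<in> sets borel"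
  shows "valprob f A + valprob f B \<le> valprob f C"
proof -
  interpret finite_measure MM by (rule MM_fin)
  show ?thesis
  proof (cases "A \<in> sets borel \<and> B \<in> sets borel")
    case True
    then have "valprob f (A \<union> B) = valprob f A + valprob f B"
      unfolding valprob_def using assms by (intro finite_measure_Union) auto
    moreover have "valprob f (A \<union> B) \<le> valprob f C" using assms by (intro vp_mono) auto
    ultimately show ?thesis by simp
  next
    case False
    show ?thesis
    proof (cases "A \<in> sets borel")
      case False
      then have "valprob f A = 0" unfolding valprob_def by (simp add: measure_notin_sets)
      moreover have "valprob f B \<le> valprob f C" using assms by (intro vp_mono) auto
      ultimately show ?thesis by simp
    next
      case True
      with False have "B \<notin> sets borel" by blast
      then have "valprob f B = 0" unfolding valprob_def by (simp add: measure_notin_sets)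
      moreover have "valprob f A \<le> valprob f C" using assms by (intro vp_mono) auto
      ultimately show ?thesis by simp
    qed
  qed
qed

end



lemma W_lt:
  fixes qe ql :: real
  assumes m: "m \<ge> 1" and qe: "qe > 0" and ql: "ql \<ge> 0"
  shows "(\<Sum>k\<in>{0..m}. real (m choose k) * qe ^ k * ql ^ (m-k) / real (k+1)) < (qe+ql)^m"
proof -
  have "(qe+ql)^m = (\<Sum>k\<in>{0..m}. real (m choose k) * qe ^ k * ql ^ (m-k))"
    by (simp add: binomial_ring atMost_atLeast0)
  moreover have "(\<Sum>k\<in>{0..m}. real (m choose k) * qe ^ k * ql ^ (m-k) / real (k+1))
      < (\<Sum>k\<in>{0..m}. real (m choose k) * qe ^ k * ql ^ (m-k))"
  proof (rule sum_strict_mono_ex1)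
    show "\<forall>x\<in>{0..m}. real (m choose x) * qe ^ x * ql ^ (m - x) / real (x + 1)
        \<le> real (m choose x) * qe ^ x * ql ^ (m - x)"
    proof
      fix x assume "x \<in> {0..m}"
      have "0 \<le> real (m choose x) * qe ^ x * ql ^ (m - x)" using qe ql by simp
      then show "real (m choose x) * qe ^ x * ql ^ (m - x) / real (x + 1)
        \<le> real (m choose x) * qe ^ x * ql ^ (m - x)"
        by (simp add: divide_le_eq mult_le_cancel_left1)
    qed
    show "\<exists>a\<in>{0..m}. real (m choose a) * qe ^ a * ql ^ (m - a) / real (a + 1)
        < real (m choose a) * qe ^ a * ql ^ (m - a)"
    proof (intro bexI[of _ m])
      have p: "qe ^ m > 0" using qe by simp
      have "real (m + 1) > 1" using m by simp
      then show "real (m choose m) * qe ^ m * ql ^ (m - m) / real (m + 1) < real (m choose m) * qe ^ m * ql ^ (m - m)"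
        using p by (simp add: divide_less_eq)
    qed simp
  qed simp
  ultimately show ?thesis by simp
qed

lemma W_pos:
  fixes qe ql :: real
  assumes qe: "qe > 0" and ql: "ql \<ge> 0"
  shows "(\<Sum>k\<in>{0..m}. real (m choose k) * qe ^ k * ql ^ (m-k) / real (k+1)) > 0"
proof -
  have "real (m choose m) * qe ^ m * ql ^ (m-m) / real (m+1)
     \<le> (\<Sum>k\<in>{0..m}. real (m choose k) * qe ^ k * ql ^ (m-k) / real (k+1))"
    by (rule member_le_sum) (use qe ql in auto)
  moreover have "real (m choose m) * qe ^ m * ql ^ (m-m) / real (m+1) > 0" using qe by simp
  ultimately show ?thesis by linarith
qed

lemma W_nonneg:
  fixes qe ql :: real
  assumes qe: "qe \<ge> 0" and ql: "ql \<ge> 0"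
  shows "(\<Sum>k\<in>{0..m}. real (m choose k) * qe ^ k * ql ^ (m-k) / real (k+1)) \<ge> 0"
  by (rule sum_nonneg) (use qe ql in auto)

lemma W_zero:
  fixes ql :: real
  shows "(\<Sum>k\<in>{0..m}. real (m choose k) * 0 ^ k * ql ^ (m-k) / real (k+1)) = ql ^ m"
proof -
  have "(\<Sum>k\<in>{0..m}. real (m choose k) * 0 ^ k * ql ^ (m-k) / real (k+1))
     = real (m choose 0) * 0 ^ 0 * ql ^ (m-0) / real (0+1) + (\<Sum>k\<in>{0..m} - {0}. real (m choose k) * 0 ^ k * ql ^ (m-k) / real (k+1))"
    by (rule sum.remove) auto
  also have "(\<Sum>k\<in>{0..m} - {0}. real (m choose k) * (0::real) ^ k * ql ^ (m-k) / real (k+1)) = 0"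
    by (rule sum.neutral) auto
  finally show ?thesis by simp
qed



lemma c_incr:
  fixes c c' :: "real \<Rightarrow> real"
  assumes c0: "c 0 = 1"
    and cder: "\<And>t. t \<in> {0..1} \<Longrightarrow> (c has_real_derivative c' t) (at t within {0..1})"
    and c'gt: "\<And>t. t \<in> {0..1} \<Longrightarrow> c' t > -1"
    and q: "0 \<le> q" "q \<le> 1" and t: "0 < t" "t \<le> 1"
  shows "c t * q + t > q"
proof -
  have cc: "continuous_on {0..1} c" by (rule DERIV_continuous_on[OF cder])
  have "(\<lambda>t. c t * q + t) 0 < (\<lambda>t. c t * q + t) t"
  proof (rule DERIV_pos_imp_increasing_open[OF t(1)])
    fix x :: real assume x: "0 < x" "x < t"
    have "(c has_real_derivative c' x) (at x within {0..1})" using x t by (intro cder) auto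
    then have "(c has_real_derivative c' x) (at x within {0<..<1})"
      by (rule has_field_derivative_subset) auto
    moreover have "at x within {0<..<1} = at x" using x t by (intro at_within_open) auto
    ultimately have d: "(c has_real_derivative c' x) (at x)" by simp
    have "((\<lambda>t. c t * q + t) has_real_derivative c' x * q + 1) (at x)"
      using DERIV_add[OF DERIV_mult[OF d DERIV_const[of q]] DERIV_ident] by simp
    moreover have "c' x * q + 1 > 0"
    proof (cases "c' x \<ge> 0")
      case True then have "c' x * q \<ge> 0" using q by simp
      then show ?thesis by simp
    next
      case False
      then have "c' x * q \<ge> c' x * 1" using q by (intro mult_left_mono_neg) auto
      moreover have "c' x > -1" using x t by (intro c'gt) auto
      ultimately show ?thesis by simp
    qed
    ultimately show "\<exists>y. ((\<lambda>t. c t * q + t) has_real_derivative y) (at x) \<and> 0 < y" by blast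
  next
    show "continuous_on {0..t} (\<lambda>t. c t * q + t)"
    proof -
      have "continuous_on {0..t} c" using t by (intro continuous_on_subset[OF cc]) auto
      then show ?thesis by (intro continuous_intros)
    qed
  qed
  then show ?thesis using c0 by simp
qed


theorem lemma1:
  fixes n :: nat and F f f' c c' b :: "real \<Rightarrow> real" and s p lam :: real
  assumes n2: "n \<ge> 2"
    and F0: "F 0 = 0" and F1: "F 1 = 1"
    and Fsupp: "strict_mono_on {0..1} F"
    and Fder: "\<And>x. x \<in> {0..1} \<Longrightarrow> (F has_real_derivative f x) (at x within {0..1})"
    and fder: "\<And>x. x \<in> {0..1} \<Longrightarrow> (f has_real_derivative f' x) (at x within {0..1})"
    and fnn: "\<And>x. x \<in> {0..1} \<Longrightarrow> f x \<ge> 0"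
    and c0: "c 0 = 1"
    and cnn: "\<And>t. t \<in> {0..1} \<Longrightarrow> c t \<ge> 0"
    and cder: "\<And>t. t \<in> {0..1} \<Longrightarrow> (c has_real_derivative c' t) (at t within {0..1})"
    and c'gt: "\<And>t. t \<in> {0..1} \<Longrightarrow> c' t > -1"
    and ccases: "(\<forall>t\<in>{0..1}. c t = 1) \<or> (\<forall>t\<in>{0..1}. c' t < 0)"
    and s: "s \<in> {0..1}"
    and p: "p \<in> {s..1}"
    and lam: "0 \<le> lam" "lam \<le> p"
    and bmono: "strict_mono_on {0..lam} b"
    and bdiff: "\<And>v. v \<in> {0..lam} \<Longrightarrow> b differentiable (at v within {0..lam})"
    and b0: "b 0 = 0"
    and brange: "b ` {0..lam} \<subseteq> {0..s}"
    and eq: "is_equilibrium n F f c s p lam b"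
  shows "lam = p
    \<and> (\<forall>x\<in>{0..s}. valprob f {w \<in> {0..<p}. dutch_bid s lam b w = x} = 0)
    \<and> (p < 1 \<longrightarrow>
         c (s - b p) * p - b p = p - s
       \<and> b p = s
       \<and> (\<forall>q\<in>{0..lam}. b q = s \<longrightarrow> q = p)
       \<and> (\<forall>q\<in>{s..<p}. c (s - b q) * q - b q \<noteq> q - s))
    \<and> (p = 1 \<longrightarrow> b 1 \<le> s)"
proof -
  have fcont: "continuous_on {0..1} f" by (rule DERIV_continuous_on[OF fder])
  have Fcont: "continuous_on {0..1} F" by (rule DERIV_continuous_on[OF Fder])
  note VIcc = vp_Icc[OF Fder fcont fnn]
  note VIco = vp_Ico[OF Fder fcont fnn]
  note Vsing = vp_sing[OF Fder fcont fnn]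
  note Vmono = vp_mono[OF Fder fcont fnn]
  note Vadd = vp_add_le[OF Fder fcont fnn]
  have Fle: "F a \<le> F b" if "0 \<le> a" "a \<le> b" "b \<le> 1" for a b
  proof (cases "a = b")
    case False
    then show ?thesis using that strict_mono_onD[OF Fsupp, of a b] by auto
  qed simp
  have Flt: "F a < F b" if "0 \<le> a" "a < b" "b \<le> 1" for a b
    using that strict_mono_onD[OF Fsupp, of a b] by auto
  have s0: "0 \<le> s" "s \<le> 1" using s by auto
  have p0: "s \<le> p" "p \<le> 1" using p by auto
  have E1: "dutch_util n f c s p (dutch_bid s lam b) v x \<le> bid_util n F f c s p v"
    if "v \<in> {0..1}" "p \<le> v" "x \<in> {0..s}" for v x
    using eq that unfolding is_equilibrium_def by blast
  have E2: "bid_util n F f c s p v \<le> dutch_util n f c s p (dutch_bid s lam b) v (dutch_bid s lam b v)"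
    if "v \<in> {0..1}" "v < p" for v
    using eq that unfolding is_equilibrium_def by blast
  have E3: "dutch_util n f c s p (dutch_bid s lam b) v x \<le> dutch_util n f c s p (dutch_bid s lam b) v (dutch_bid s lam b v)"
    if "v \<in> {0..1}" "v < p" "x \<in> {0..s}" for v x
    using eq that unfolding is_equilibrium_def by blast
  have binj: "x = y" if "x \<in> {0..lam}" "y \<in> {0..lam}" "b x = b y" for x y
  proof (rule ccontr)
    assume "x \<noteq> y"
    then have "x < y \<or> y < x" by auto
    then show False using strict_mono_onD[OF bmono] that by fastforce
  qed
  have sub1: "A = {} \<or> (\<exists>w. A = {w})" if "\<And>x y. x \<in> A \<Longrightarrow> y \<in> A \<Longrightarrow> x = y" for A :: "real set"
    using that by blast
  have m1: "n - 1 \<ge> 1" using n2 by simp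

  have L: "lam = p"
  proof (rule ccontr)
    assume "lam \<noteq> p"
    then have lp: "lam < p" using lam by simp
    define beta where "beta = dutch_bid s lam b"
    define Se where "Se = {w \<in> {0..<p}. beta w = s}"
    define Sl where "Sl = {w \<in> {0..<p}. beta w < s}"
    define qe where "qe = valprob f Se"
    define ql where "ql = valprob f Sl"
    define W where "W = (\<Sum>k\<in>{0..n-1}. real ((n-1) choose k) * qe ^ k * ql ^ (n-1-k) / real (k+1))"
    have winW: "dutch_winprob n f p beta s = W"
      unfolding dutch_winprob_def W_def qe_def ql_def Se_def Sl_def Let_def by simp
    define T where "T = {w \<in> {0..lam}. b w = s}"
    have "T = {} \<or> (\<exists>w. T = {w})"
    proof (rule sub1)
      fix x y assume "x \<in> T" "y \<in> T"
      then show "x = y" using binj[of x y] unfolding T_def by auto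
    qed
    then have Tfin: "finite T" by auto
    have "Se = T \<union> {lam<..<p}"
      unfolding Se_def T_def beta_def dutch_bid_def using lam lp by auto
    moreover have "T \<in> sets borel" using Tfin by (intro borel_closed finite_imp_closed)
    ultimately have Sem: "Se \<in> sets borel" by simp
    define a' where "a' = lam + (p - lam)/3"
    define b' where "b' = lam + 2*(p - lam)/3"
    have ab': "lam < a'" "a' < b'" "b' < p" using lp unfolding a'_def b'_def by (auto simp: field_simps)
    have "{a'..b'} \<subseteq> Se" unfolding Se_def beta_def dutch_bid_def using ab' lam by auto
    then have "valprob f {a'..b'} \<le> qe" unfolding qe_def using Sem by (intro Vmono) auto
    moreover have "valprob f {a'..b'} = F b' - F a'"
      using ab' lam p0 by (intro VIcc Fle) auto
    moreover have "F a' < F b'" using ab' lam p0 by (intro Flt) auto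
    ultimately have qepos: "qe > 0" by simp
    have qlnn: "ql \<ge> 0" unfolding ql_def valprob_def by simp
    have "Sl \<inter> Se = {}" "Sl \<union> Se \<subseteq> {0..p}" unfolding Sl_def Se_def by auto
    then have "ql + qe \<le> valprob f {0..p}" unfolding ql_def qe_def by (intro Vadd) auto
    also have "\<dots> = F p" using VIcc[of 0 p] p0 s0 F0 Fle[of 0 p] by simp
    finally have qsum: "qe + ql \<le> F p" by simp
    have Wlt: "W < (qe + ql) ^ (n-1)" unfolding W_def using W_lt[OF m1 qepos qlnn] by simp
    have Wpos: "W > 0" unfolding W_def by (rule W_pos[OF qepos qlnn])
    have powle: "(qe + ql) ^ (n-1) \<le> F p ^ (n-1)" using qsum qepos qlnn by (intro power_mono) auto
    have du_s: "dutch_util n f c s p beta v s = (v - s) * W" for v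
      unfolding dutch_util_def winW using c0 by simp
    have bu: "bid_util n F f c s p v = (v - s) * F p ^ (n-1)" if "v < p" for v
      unfolding bid_util_def using that by simp
    show False
    proof (cases "max lam s < p")
      case True
      define v where "v = (max lam s + p) / 2"
      have v: "lam < v" "s < v" "v < p" using True unfolding v_def by auto
      have v01: "v \<in> {0..1}" using v lam p0 by auto
      have db: "beta v = s" unfolding beta_def dutch_bid_def using v by simp
      have "bid_util n F f c s p v \<le> dutch_util n f c s p beta v (beta v)"
        using E2[OF v01 v(3)] unfolding beta_def .
      then have "(v - s) * F p ^ (n-1) \<le> (v - s) * W" using db du_s bu[OF v(3)] by simp
      then have "F p ^ (n-1) \<le> W" using v by simp
      then show False using Wlt powle by simp
    next
      case False
      then have ps: "p = s" using lp p0 by auto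
      define v where "v = (lam + p) / 2"
      have v: "lam < v" "v < p" using lp unfolding v_def by auto
      have v01: "v \<in> {0..1}" using v lam p0 by auto
      have db: "beta v = s" unfolding beta_def dutch_bid_def using v by simp
      have "dutch_util n f c s p beta v 0 \<le> dutch_util n f c s p beta v (beta v)"
        using E3[OF v01 v(2), of 0] s0 unfolding beta_def by simp
      moreover have "dutch_util n f c s p beta v 0 \<ge> 0"
      proof -
        have "c s \<ge> 0" using cnn s0 by simp
        moreover have "v \<ge> 0" using v01 by simp
        moreover have "dutch_winprob n f p beta 0 \<ge> 0"
          unfolding dutch_winprob_def Let_def
          by (rule W_nonneg) (auto simp: valprob_def)
        ultimately show ?thesis unfolding dutch_util_def by simp
      qed
      moreover have "(v - s) * W < 0" using v ps Wpos by (simp add: mult_neg_pos)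
      ultimately show False using db du_s by simp
    qed
  qed

  have T2: "\<forall>x\<in>{0..s}. valprob f {w \<in> {0..<p}. dutch_bid s lam b w = x} = 0"
  proof
    fix x assume x: "x \<in> {0..s}"
    define A where "A = {w \<in> {0..<p}. dutch_bid s lam b w = x}"
    have Aeq: "A = {w \<in> {0..<p}. b w = x}" unfolding A_def dutch_bid_def using L by auto
    have "A = {} \<or> (\<exists>w. A = {w})"
    proof (rule sub1)
      fix u w assume "u \<in> A" "w \<in> A"
      then have "u \<in> {0..lam}" "w \<in> {0..lam}" "b u = b w" unfolding Aeq using L by auto
      then show "u = w" by (rule binj)
    qed
    moreover have "A \<subseteq> {0..1}" unfolding A_def using p0 by auto
    ultimately have "valprob f A = 0"
    proof (elim disjE exE)
      assume "A = {}" then show ?thesis by (simp add: valprob_def)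
    next
      fix w assume "A = {w}" "A \<subseteq> {0..1}"
      then show ?thesis using Vsing[of w] by simp
    qed
    then show "valprob f {w \<in> {0..<p}. dutch_bid s lam b w = x} = 0"
      unfolding A_def .
  qed

  have bstrict: "b w < b v \<longleftrightarrow> w < v" if "w \<in> {0..p}" "v \<in> {0..p}" for w v
  proof
    assume bwv: "b w < b v"
    show "w < v"
    proof (rule ccontr)
      assume "\<not> w < v"
      then have "v < w \<or> v = w" by auto
      then show False using strict_mono_onD[OF bmono, of v w] that L bwv by auto
    qed
  next
    assume "w < v" then show "b w < b v" using strict_mono_onD[OF bmono] that L by auto
  qed
  have winb: "dutch_winprob n f p (dutch_bid s lam b) (b v) = F v ^ (n-1)" if v: "v \<in> {0..p}" for v
  proof -
    have "{w \<in> {0..<p}. dutch_bid s lam b w < b v} = {0..<v}"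
      using bstrict v L unfolding dutch_bid_def by auto
    then have ql: "valprob f {w \<in> {0..<p}. dutch_bid s lam b w < b v} = F v"
      using VIco[of 0 v] v p0 F0 Fle[of 0 v] by simp
    have "{w \<in> {0..<p}. dutch_bid s lam b w = b v} \<subseteq> {v}"
    proof
      fix w assume "w \<in> {w \<in> {0..<p}. dutch_bid s lam b w = b v}"
      then have "w \<in> {0..lam}" "v \<in> {0..lam}" "b w = b v" using v L unfolding dutch_bid_def by auto
      then have "w = v" by (rule binj)
      then show "w \<in> {v}" by simp
    qed
    then have "valprob f {w \<in> {0..<p}. dutch_bid s lam b w = b v} \<le> valprob f {v}"
      by (intro Vmono) auto
    moreover have "valprob f {v} = 0" using Vsing v p0 by simp
    ultimately have qe: "valprob f {w \<in> {0..<p}. dutch_bid s lam b w = b v} = 0"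
      using measure_nonneg unfolding valprob_def by (metis order_antisym)
    show ?thesis unfolding dutch_winprob_def Let_def ql qe by (rule W_zero)
  qed
  have dub: "dutch_util n f c s p (dutch_bid s lam b) v (b v) = (c (s - b v) * v - b v) * F v ^ (n-1)"
    if "v \<in> {0..p}" for v
    unfolding dutch_util_def winb[OF that] by simp
  have brng: "b v \<in> {0..s}" if "v \<in> {0..p}" for v using brange that L by (metis image_subset_iff)

  have IND: "c (s - b p) * p - b p = p - s"
  proof (cases "p = 0")
    case True
    then have "s = 0" using p0 s0 by simp
    then show ?thesis using True b0 by simp
  next
    case False
    then have ppos: "p > 0" using p0 s0 by simp
    have Fpp: "F p > 0" using Flt[of 0 p] ppos p0 F0 by simp
    define \<phi> where "\<phi> v = (c (s - b v) * v - b v) * F v ^ (n-1) - (v - s) * F p ^ (n-1)" for v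
    have bcont: "continuous_on {0..p} b"
    proof -
      have "continuous (at v within {0..p}) b" if "v \<in> {0..p}" for v
        using differentiable_imp_continuous_within[OF bdiff[of v]] that L by simp
      then show ?thesis by (simp add: continuous_on_eq_continuous_within)
    qed
    have ccont: "continuous_on {0..1} c" by (rule DERIV_continuous_on[OF cder])
    have cb: "continuous_on {0..p} (\<lambda>v. c (s - b v))"
    proof (rule continuous_on_compose2[OF ccont])
      show "continuous_on {0..p} (\<lambda>v. s - b v)" using bcont by (intro continuous_intros)
      show "(\<lambda>v. s - b v) ` {0..p} \<subseteq> {0..1}" using brng s0 by fastforce
    qed
    have Fc: "continuous_on {0..p} F" using p0 by (intro continuous_on_subset[OF Fcont]) auto
    have phic: "continuous_on {0..p} \<phi>" unfolding \<phi>_def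
      using cb bcont Fc by (intro continuous_intros)
    have cl: "closure {0..<p} = {0..p}" using ppos by simp
    have ge: "0 \<le> \<phi> p"
    proof (rule continuous_ge_on_closure[where S="{0..<p}" and f=\<phi> and x=p and a=0])
      show "continuous_on (closure {0..<p}) \<phi>" using phic cl by simp
      show "p \<in> closure {0..<p}" using cl ppos by simp
      fix v assume v: "v \<in> {0..<p}"
      then have v01: "v \<in> {0..1}" using p0 by auto
      have "bid_util n F f c s p v \<le> dutch_util n f c s p (dutch_bid s lam b) v (dutch_bid s lam b v)"
        using E2[OF v01] v by simp
      moreover have "dutch_bid s lam b v = b v" using v L unfolding dutch_bid_def by simp
      moreover have "bid_util n F f c s p v = (v - s) * F p ^ (n-1)"
        unfolding bid_util_def using v by simp
      ultimately show "0 \<le> \<phi> v" unfolding \<phi>_def using dub[of v] v by simp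
    qed
    have "dutch_util n f c s p (dutch_bid s lam b) p (b p) \<le> bid_util n F f c s p p"
      using E1[of p "b p"] p0 ppos brng[of p] by simp
    moreover have "bid_util n F f c s p p = (p - s) * F p ^ (n-1)"
      unfolding bid_util_def by simp
    ultimately have le: "(c (s - b p) * p - b p) * F p ^ (n-1) \<le> (p - s) * F p ^ (n-1)"
      using dub[of p] p0 ppos by simp
    have "(c (s - b p) * p - b p) * F p ^ (n-1) = (p - s) * F p ^ (n-1)"
      using le ge unfolding \<phi>_def by linarith
    moreover have "F p ^ (n-1) \<noteq> 0" using Fpp by simp
    ultimately show ?thesis using mult_right_cancel by blast
  qed

  have cineq: "c (s - x) * q - x > q - s" if "q \<in> {0..1}" "x \<in> {0..<s}" for q x
    using c_incr[OF c0 cder c'gt, of q "s - x"] that s0 by auto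
  have bps: "b p = s"
  proof (rule ccontr)
    assume "b p \<noteq> s"
    then have "b p \<in> {0..<s}" using brng[of p] p0 s0 by auto
    then show False using cineq[of p "b p"] IND p0 s0 by auto
  qed
  have P3: "\<forall>q\<in>{0..lam}. b q = s \<longrightarrow> q = p"
  proof (intro ballI impI)
    fix q assume q: "q \<in> {0..lam}" "b q = s"
    have "p \<in> {0..lam}" using L p0 s0 by auto
    moreover have "b q = b p" using q bps by simp
    ultimately show "q = p" using binj[OF q(1)] by blast
  qed
  have P4: "\<forall>q\<in>{s..<p}. c (s - b q) * q - b q \<noteq> q - s"
  proof
    fix q assume q: "q \<in> {s..<p}"
    then have "b q < b p" using bstrict[of q p] s0 p0 by auto
    then have "b q \<in> {0..<s}" using brng[of q] q s0 bps by auto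
    then show "c (s - b q) * q - b q \<noteq> q - s" using cineq[of q "b q"] q p0 s0 by auto
  qed
  have P5: "p = 1 \<longrightarrow> b 1 \<le> s" using brng[of 1] by auto
  show ?thesis using L T2 IND bps P3 P4 P5 by blast
qed

end
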